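(* For every $n\in\mathbb{N}$, \begin{align*} \sum_{j=0}^{n}\sum_{i=0}^{j}\frac{\binom{n+1}{i}}{\binom{n}{j}}(-1)^j&=\frac{n+1}{2n+4}\left(1+(-1)^n\big(2^{n+2}-1\big)\right),\\ \sum_{j=0}^{n}\sum_{i=0}^{j}\frac{\binom{2n+1}{i}}{\binom{2n}{j}}(-1)^j&=\frac{(-1)^n\,2^{2n-1}}{\binom{2n}{n}}+\frac{2n+1}{n+1}\cdot\frac{(-1)^n+1}{4}. \end{align*} *)

theory Defs
  imports Complex_Main
begin

end

theory Submission
  imports Defs
begin

declare binomial_Suc_Suc[simp del]

lemma recip_id:
  assumes "j \<le> m"
  shows "1 / real (m choose j) = real (m+1) / real (m+2) *
           (1 / real ((m+1) choose j) + 1 / real ((m+1) choose (j+1)))"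
proof -
  have c0: "real (m choose j) > 0" using assms by simp
  have a: "real (Suc j) * real (Suc m choose Suc j) = real (Suc m) * real (m choose j)"
    using Suc_times_binomial[of j m] by (metis of_nat_mult)
  have b0: "(Suc m - j) * (Suc m choose j) = Suc m * (m choose j)"
    using binomial_absorb_comp[of "Suc m" j] by simp
  have b: "real (Suc m - j) * real (Suc m choose j) = real (Suc m) * real (m choose j)"
    using b0 by (metis of_nat_mult)
  have sj: "real (Suc m - j) = real m + 1 - real j" using assms by (simp add: of_nat_diff)
  have p1: "real (Suc m choose Suc j) > 0" using assms by (simp del: binomial_Suc_Suc)
  have p2: "real (Suc m choose j) > 0" using assms by (simp del: binomial_Suc_Suc)
  have nz: "0 < real (m choose j) + real m * real (m choose j)" using c0 by (simp add: add_pos_nonneg)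
  have e1: "1 / real ((m+1) choose (j+1)) = real (Suc j) / (real (Suc m) * real (m choose j))"
    using a p1 c0 nz by (simp add: field_simps)
  have e2: "1 / real ((m+1) choose j) = (real m + 1 - real j) / (real (Suc m) * real (m choose j))"
    using b p2 c0 sj nz by (simp add: field_simps)
  have g: "\<And>c M J :: real. c > 0 \<Longrightarrow> M \<ge> 0 \<Longrightarrow>
     1 / c = (M+1)/(M+2) * ((M + 1 - J) / ((M+1) * c) + (J+1) / ((M+1) * c))"
  proof -
    fix c M J :: real assume c: "c > 0" and M: "M \<ge> 0"
    have p: "(M+1)*c > 0" using c M by simp
    have e: "(M + 1 - J) / ((M+1) * c) + (J+1) / ((M+1) * c) = (M+2)/((M+1)*c)"
      by (simp add: add_divide_distrib[symmetric])
    have nz: "M+2 \<noteq> 0" "M+1 \<noteq> 0" "c \<noteq> 0" using c M by auto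
    have f: "(M+1)/(M+2) * ((M+2)/((M+1)*c)) = 1/c" using nz by (simp add: divide_simps)
    show "1 / c = (M+1)/(M+2) * ((M + 1 - J) / ((M+1) * c) + (J+1) / ((M+1) * c))"
      unfolding e by (rule f[symmetric])
  qed
  show ?thesis unfolding e1 e2 using g[OF c0, of "real m" "real j"] by (simp add: add.commute)
qed

definition AA :: "nat \<Rightarrow> nat \<Rightarrow> real" where
  "AA m j = (\<Sum>i=0..j. real ((m+1) choose i))"

lemma main_gen:
  assumes "k \<le> m"
  shows "(\<Sum>j=0..k. \<Sum>i=0..j. (real ((m+1) choose i) / real (m choose j)) * (-1)^j)
    = real (m+1) / real (m+2) * ((\<Sum>j=0..k. (-1::real)^j) + (-1)^k * AA m k / real ((m+1) choose (k+1)))"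
  using assms
proof (induction k)
  case 0
  have "1 / real (m choose 0) = real (m+1) / real (m+2) *
           (1 / real ((m+1) choose 0) + 1 / real ((m+1) choose (0+1)))"
    by (rule recip_id) simp
  then show ?case by (simp add: AA_def field_simps)
next
  case (Suc k)
  have r: "1 / real (m choose Suc k) = real (m+1) / real (m+2) *
           (1 / real ((m+1) choose Suc k) + 1 / real ((m+1) choose (Suc k+1)))"
    using Suc.prems by (intro recip_id) simp
  have AS: "AA m (Suc k) = AA m k + real ((m+1) choose Suc k)" by (simp add: AA_def)
  have pos: "real ((m+1) choose Suc k) > 0" using Suc.prems by (simp del: binomial_Suc_Suc)
  have inner: "(\<Sum>i=0..Suc k. (real ((m+1) choose i) / real (m choose Suc k)) * (-1)^Suc k)
     = (-1)^Suc k * AA m (Suc k) * (1 / real (m choose Suc k))"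
  proof -
    have "(\<Sum>i=0..Suc k. (real ((m+1) choose i) / real (m choose Suc k)) * (-1)^Suc k)
       = (\<Sum>i=0..Suc k. real ((m+1) choose i)) / real (m choose Suc k) * (-1)^Suc k"
      by (simp only: sum_distrib_right sum_divide_distrib)
    then show ?thesis by (simp add: AA_def)
  qed
  have "(\<Sum>j=0..Suc k. \<Sum>i=0..j. (real ((m+1) choose i) / real (m choose j)) * (-1)^j)
     = real (m+1) / real (m+2) * ((\<Sum>j=0..k. (-1::real)^j) + (-1)^k * AA m k / real ((m+1) choose (k+1)))
       + (-1)^Suc k * AA m (Suc k) * (1 / real (m choose Suc k))"
    using Suc.IH Suc.prems inner by simp
  also have "\<dots> = real (m+1) / real (m+2) * ((\<Sum>j=0..Suc k. (-1::real)^j) + (-1)^Suc k * AA m (Suc k) / real ((m+1) choose (Suc k+1)))"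
  proof -
    have gen: "\<And>p S s a c d :: real. c \<noteq> 0 \<Longrightarrow> d \<noteq> 0 \<Longrightarrow> p * (S + s * a / c) + (- s) * (a + c) * (p * (1/c + 1/d))
        = p * ((S + - s) + (- s) * (a + c) / d)"
      by (simp add: field_simps)
    have posd: "real ((m+1) choose (Suc k+1)) \<noteq> 0" using Suc.prems by (simp del: binomial_Suc_Suc)
    have sg: "(-1::real)^Suc k = -((-1)^k)" by simp
    have ss: "(\<Sum>j=0..Suc k. (-1::real)^j) = (\<Sum>j=0..k. (-1::real)^j) + -((-1)^k)" by simp
    have pos': "real ((m+1) choose (k+1)) \<noteq> 0" using pos by simp
    have posd': "real ((m+1) choose (k+1+1)) \<noteq> 0" using posd by simp
    show ?thesis unfolding r AS sg ss unfolding Suc_eq_plus1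
      by (rule gen[OF pos' posd'])
  qed
  finally show ?case .
qed

lemma alt_sum: "(\<Sum>j=0..k. (-1::real)^j) = (1 + (-1)^k) / 2"
  by (induction k) auto

lemma half_sum: "(\<Sum>i=0..n. real ((2*n+1) choose i)) = 2^(2*n)"
proof -
  have tot: "(\<Sum>i=0..2*n+1. real ((2*n+1) choose i)) = 2^(2*n+1)"
    using choose_row_sum[of "2*n+1"] atMost_atLeast0
    by (metis of_nat_numeral of_nat_power of_nat_sum)
  have split: "(\<Sum>i=0..2*n+1. real ((2*n+1) choose i)) =
     (\<Sum>i=0..n. real ((2*n+1) choose i)) + (\<Sum>i=Suc n..2*n+1. real ((2*n+1) choose i))"
  proof -
    have "{0..2*n+1} = {0..n} \<union> {Suc n..2*n+1}" by auto
    then show ?thesis by (simp add: sum.union_disjoint del: binomial_Suc_Suc)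
  qed
  have sym: "(\<Sum>i=Suc n..2*n+1. real ((2*n+1) choose i)) = (\<Sum>i=0..n. real ((2*n+1) choose i))"
    by (rule sum.reindex_bij_witness[where i="\<lambda>i. 2*n+1-i" and j="\<lambda>i. 2*n+1-i"])
      (auto simp: binomial_symmetric[symmetric])
  show ?thesis using tot split sym by simp
qed

theorem mainTheorem13:
  fixes n :: nat
  shows "((\<Sum>j=0..n. \<Sum>i=0..j. (real ((n+1) choose i) / real (n choose j)) * (-1)^j)
           = real (n+1) / real (2*n+4) * (1 + (-1)^n * (2^(n+2) - 1)))
    \<and> ((\<Sum>j=0..n. \<Sum>i=0..j. (real ((2*n+1) choose i) / real ((2*n) choose j)) * (-1)^j)
           = (-1)^n * (2^(2*n) / 2) / real ((2*n) choose n)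
             + real (2*n+1) / real (n+1) * (((-1)^n + 1) / 4))"
proof
  have A1: "AA n n = 2^(n+1) - 1"
  proof -
    have "(\<Sum>i=0..n+1. real ((n+1) choose i)) = 2^(n+1)"
      using choose_row_sum[of "n+1"] atMost_atLeast0
      by (metis of_nat_numeral of_nat_power of_nat_sum)
    then show ?thesis by (simp add: AA_def)
  qed
  have "(\<Sum>j=0..n. \<Sum>i=0..j. (real ((n+1) choose i) / real (n choose j)) * (-1)^j)
     = real (n+1) / real (n+2) * ((1 + (-1)^n) / 2 + (-1)^n * (2^(n+1) - 1))"
    using main_gen[of n n] A1 by (simp add: alt_sum)
  also have "\<dots> = real (n+1) / real (2*n+4) * (1 + (-1)^n * (2^(n+2) - 1))"
    by (simp add: field_simps)
  finally show "(\<Sum>j=0..n. \<Sum>i=0..j. (real ((n+1) choose i) / real (n choose j)) * (-1)^j)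
           = real (n+1) / real (2*n+4) * (1 + (-1)^n * (2^(n+2) - 1))" .
next
  have A2: "AA (2*n) n = 2^(2*n)" using half_sum by (simp add: AA_def)
  have c: "real (n+1) * real ((2*n+1) choose (n+1)) = real (2*n+1) * real ((2*n) choose n)"
    using Suc_times_binomial[of n "2*n"] by (metis Suc_eq_plus1 of_nat_mult)
  have pc: "real ((2*n) choose n) > 0" by simp
  have pc2: "real ((2*n+1) choose (n+1)) > 0" by (simp del: binomial_Suc_Suc)
  have "(\<Sum>j=0..n. \<Sum>i=0..j. (real ((2*n+1) choose i) / real ((2*n) choose j)) * (-1)^j)
     = real (2*n+1) / real (2*n+2) * ((1 + (-1)^n) / 2 + (-1)^n * 2^(2*n) / real ((2*n+1) choose (n+1)))"
    using main_gen[of n "2*n"] A2 by (simp add: alt_sum)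
  also have "\<dots> = (-1)^n * (2^(2*n) / 2) / real ((2*n) choose n)
             + real (2*n+1) / real (n+1) * (((-1)^n + 1) / 4)"
  proof -
    have cc: "real ((2*n+1) choose (n+1)) = real (2*n+1) * real ((2*n) choose n) / real (n+1)"
      using c by (simp add: field_simps)
    have g: "\<And>C N x q :: real. C > 0 \<Longrightarrow> N \<ge> 0 \<Longrightarrow>
      (2*N+1)/(2*N+2)*((1+x)/2 + x*q/((2*N+1)*C/(N+1))) = x*(q/2)/C + (2*N+1)/(N+1)*((x+1)/4)"
    proof -
      fix C N x q :: real assume C: "C > 0" and N: "N \<ge> 0"
      have a1: "2*N+1 > 0" "N+1 > 0" "2*N+2 = 2*(N+1)" using N by auto
      have h1: "x*q/((2*N+1)*C/(N+1)) = x*q*(N+1)/((2*N+1)*C)" using a1 C by (simp add: field_simps)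
      have nz: "2*N+1 \<noteq> 0" "N+1 \<noteq> 0" "C \<noteq> 0" using a1 C by auto
      have h2: "(2*N+1)/(2*(N+1)) * (x*q*(N+1)/((2*N+1)*C)) = x*(q/2)/C" using nz by (simp add: divide_simps)
      have h3: "(2*N+1)/(2*(N+1)) * ((1+x)/2) = (2*N+1)/(N+1)*((x+1)/4)" using a1 by (simp add: field_simps)
      show "(2*N+1)/(2*N+2)*((1+x)/2 + x*q/((2*N+1)*C/(N+1))) = x*(q/2)/C + (2*N+1)/(N+1)*((x+1)/4)"
      proof -
        have "(2*N+1)/(2*N+2)*((1+x)/2 + x*q/((2*N+1)*C/(N+1)))
           = (2*N+1)/(2*(N+1))*((1+x)/2 + x*q*(N+1)/((2*N+1)*C))" by (simp only: h1 a1(3))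
        also have "\<dots> = (2*N+1)/(2*(N+1))*((1+x)/2) + (2*N+1)/(2*(N+1))*(x*q*(N+1)/((2*N+1)*C))"
          by (rule distrib_left)
        also have "\<dots> = (2*N+1)/(N+1)*((x+1)/4) + x*(q/2)/C" by (simp only: h2 h3)
        finally show ?thesis by (simp only: add.commute)
      qed
    qed
    show ?thesis unfolding cc using g[OF pc, of "real n" "(-1)^n" "2^(2*n)"] by (simp add: add.commute)
  qed
  finally show "(\<Sum>j=0..n. \<Sum>i=0..j. (real ((2*n+1) choose i) / real ((2*n) choose j)) * (-1)^j)
           = (-1)^n * (2^(2*n) / 2) / real ((2*n) choose n)
             + real (2*n+1) / real (n+1) * (((-1)^n + 1) / 4)" .
qed

end
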